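(* Let $q$ be a power of an odd prime, write $q-1=2^s r$ with $r$ odd, and let $c\in\mathbb{F}_q^*$. The functional graph of $f(X)=c(X^{q+1}+X^2)$ over $\mathbb{F}_{q^2}$ is isomorphic to $$\mathscr{Z}^*(q)\ \oplus\ \bigoplus_{d\mid r}\frac{q\,\varphi(d)}{\mathrm{ord}_{d}(2)}\times\big(Cyc(\mathrm{ord}_{d}(2)),\mathscr{T}(s)\big).$$
   Context: The functional graph of a map $f:\mathbb{F}_{q^2}\to\mathbb{F}_{q^2}$ is the directed graph with vertex set $\mathbb{F}_{q^2}$ and an edge $x\to f(x)$ for every $x$. $Cyc(n)$ is the directed cycle of length $n$. $\mathscr{T}(1)$ is the tree with two vertices $P_1,P$ and the edge $P_1\to P$ (root $P$); for $m\ge1$, $\mathscr{T}(m+1)$ is obtained from $\mathscr{T}(m)$ by attaching two new vertices, each with an edge directed to it, to every vertex of the last (top) level of $\mathscr{T}(m)$. $(Cyc(n),\mathscr{T}(m))$ is the graph obtained from $Cyc(n)$ by replacing each vertex of the cycle by a copy of $\mathscr{T}(m)$ whose root is that cycle vertex. $\mathscr{Z}^*(q)$ is the graph consisting of a vertex with a loop ($Cyc(1)$) to which $q-1$ copies of $\mathscr{T}(1)$ are attached, the root of each copy being identified with the fixed vertex (i.e. a fixed vertex with $q-1$ further vertices pointing to it, which have no preimages). $\oplus$ denotes disjoint union and $k\times G$ denotes $k$ disjoint copies of $G$. $\varphi$ is Euler's totient function and $\mathrm{ord}_m(n)$ is the multiplicative order of $n$ modulo $m$ (with $\mathrm{ord}_1(2)=1$).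 *)

theory Defs
  imports "HOL-Number_Theory.Number_Theory"
begin

definition fg_iso :: "'a set \<Rightarrow> ('a \<Rightarrow> 'a) \<Rightarrow> 'b set \<Rightarrow> ('b \<Rightarrow> 'b) \<Rightarrow> bool" where
  "fg_iso V f W g \<longleftrightarrow> (\<exists>h. bij_betw h V W \<and> (\<forall>x\<in>V. h (f x) = g (h x)))"

text \<open>The tree T(m): root None (=P), Some [] (=P1) points to the root, and a vertex
  Some (b # xs) points to Some xs; vertices Some xs with length xs < m.
  Level i (i>=1) consists of the Some xs with length xs = i - 1.\<close>
definition tree_verts :: "nat \<Rightarrow> bool list option set" where
  "tree_verts m = insert None (Some ` {xs. length xs < m})"

fun tree_map :: "bool list option \<Rightarrow> bool list option" where
  "tree_map None = None"
| "tree_map (Some []) = None"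
| "tree_map (Some (b # xs)) = Some xs"

text \<open>(Cyc(n), T(m)): cycle vertices (j, None), j < n, with j -> j+1 mod n; a copy of T(m)
  rooted at each cycle vertex.\<close>
definition cyctree_verts :: "nat \<Rightarrow> nat \<Rightarrow> (nat \<times> bool list option) set" where
  "cyctree_verts n m = {0..<n} \<times> tree_verts m"

definition cyctree_map :: "nat \<Rightarrow> nat \<times> bool list option \<Rightarrow> nat \<times> bool list option" where
  "cyctree_map n x = (case x of (j, None) \<Rightarrow> (Suc j mod n, None) | (j, v) \<Rightarrow> (j, tree_map v))"

definition zstar_verts :: "nat \<Rightarrow> nat set" where
  "zstar_verts q = {0..<q}"

definition zstar_map :: "nat \<Rightarrow> nat" where
  "zstar_map i = 0"

text \<open>The graph Z*(q) (+) disjoint union over d | r of (q phi(d) / ord_d 2) copies of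
  (Cyc(ord_d 2), T(s)). A copy is indexed by (d, k) with k < q phi(d) / ord_d 2.\<close>
definition target_verts :: "nat \<Rightarrow> nat \<Rightarrow> nat \<Rightarrow> (nat + nat \<times> nat \<times> nat \<times> bool list option) set" where
  "target_verts q s r = Inl ` zstar_verts q \<union>
     Inr ` {(d, k, x). d dvd r \<and> k < q * totient d div ord d 2 \<and> x \<in> cyctree_verts (ord d 2) s}"

fun target_map :: "nat \<Rightarrow> nat \<Rightarrow> nat + nat \<times> nat \<times> nat \<times> bool list option \<Rightarrow> nat + nat \<times> nat \<times> nat \<times> bool list option" where
  "target_map q s (Inl i) = Inl (zstar_map i)"
| "target_map q s (Inr (d, k, x)) = Inr (d, k, cyctree_map (ord d 2) x)"

end

theory Submission
  imports Defs "HOL-Computational_Algebra.Polynomial"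
begin

lemma fg_isoI: "bij_betw h V W \<Longrightarrow> (\<And>x. x \<in> V \<Longrightarrow> h (f x) = g (h x)) \<Longrightarrow> fg_iso V f W g"
  unfolding fg_iso_def by blast

lemma fg_iso_refl: "fg_iso V f V f"
  by (rule fg_isoI[of id]) auto

lemma fg_iso_trans:
  assumes "fg_iso U f V g" "fg_iso V g W k" "\<forall>x\<in>U. f x \<in> U"
  shows "fg_iso U f W k"
proof -
  obtain h1 where h1: "bij_betw h1 U V" "\<forall>x\<in>U. h1 (f x) = g (h1 x)" using assms(1) unfolding fg_iso_def by blast
  obtain h2 where h2: "bij_betw h2 V W" "\<forall>x\<in>V. h2 (g x) = k (h2 x)" using assms(2) unfolding fg_iso_def by blast
  show ?thesis
  proof (rule fg_isoI[of "h2 \<circ> h1"])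
    show "bij_betw (h2 \<circ> h1) U W" using h1 h2 bij_betw_trans by blast
    fix x assume x: "x \<in> U"
    have "h1 x \<in> V" using h1(1) x bij_betwE by blast
    then show "(h2 \<circ> h1) (f x) = k ((h2 \<circ> h1) x)" using h1 h2 x by simp
  qed
qed

lemma fg_iso_sym:
  assumes "fg_iso V f W g" "\<forall>x\<in>V. f x \<in> V"
  shows "fg_iso W g V f"
proof -
  obtain h where h: "bij_betw h V W" "\<forall>x\<in>V. h (f x) = g (h x)" using assms(1) unfolding fg_iso_def by blast
  show ?thesis
  proof (rule fg_isoI[of "inv_into V h"])
    show "bij_betw (inv_into V h) W V" using h(1) by (rule bij_betw_inv_into)
    fix y assume y: "y \<in> W"
    obtain x where x: "x \<in> V" "y = h x" using h(1) y by (auto simp: bij_betw_def)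
    have "inv_into V h (g y) = inv_into V h (h (f x))" using h(2) x by simp
    also have "\<dots> = f x" using assms(2) x h(1) by (simp add: bij_betw_def)
    also have "\<dots> = f (inv_into V h y)" using x h(1) by (simp add: bij_betw_def)
    finally show "inv_into V h (g y) = f (inv_into V h y)" .
  qed
qed

lemma fg_iso_sum:
  assumes "fg_iso A1 f1 B1 g1" "fg_iso A2 f2 B2 g2"
  shows "fg_iso (Inl ` A1 \<union> Inr ` A2) (map_sum f1 f2) (Inl ` B1 \<union> Inr ` B2) (map_sum g1 g2)"
proof -
  obtain h1 where h1: "bij_betw h1 A1 B1" "\<forall>x\<in>A1. h1 (f1 x) = g1 (h1 x)" using assms(1) unfolding fg_iso_def by blast
  obtain h2 where h2: "bij_betw h2 A2 B2" "\<forall>x\<in>A2. h2 (f2 x) = g2 (h2 x)" using assms(2) unfolding fg_iso_def by blast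
  have i1: "inj_on h1 A1" and e1: "h1 ` A1 = B1" using h1(1) unfolding bij_betw_def by auto
  have i2: "inj_on h2 A2" and e2: "h2 ` A2 = B2" using h2(1) unfolding bij_betw_def by auto
  show ?thesis
  proof (rule fg_isoI[of "map_sum h1 h2"])
    show "bij_betw (map_sum h1 h2) (Inl ` A1 \<union> Inr ` A2) (Inl ` B1 \<union> Inr ` B2)"
      unfolding bij_betw_def
    proof
      show "inj_on (map_sum h1 h2) (Inl ` A1 \<union> Inr ` A2)"
      proof (rule inj_onI)
        fix x y assume "x \<in> Inl ` A1 \<union> Inr ` A2" "y \<in> Inl ` A1 \<union> Inr ` A2" "map_sum h1 h2 x = map_sum h1 h2 y"
        then show "x = y" using i1 i2 unfolding inj_on_def by (elim UnE imageE) simp_all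
      qed
      show "map_sum h1 h2 ` (Inl ` A1 \<union> Inr ` A2) = Inl ` B1 \<union> Inr ` B2"
        unfolding image_Un image_image e1[symmetric] e2[symmetric] by simp
    qed
  next
    fix x assume "x \<in> Inl ` A1 \<union> Inr ` A2"
    then show "map_sum h1 h2 (map_sum f1 f2 x) = map_sum g1 g2 (map_sum h1 h2 x)"
      using h1(2) h2(2) by (elim UnE imageE) simp_all
  qed
qed

lemma fg_iso_prod:
  assumes "fg_iso A f B g" "bij_betw e L M"
  shows "fg_iso (A \<times> L) (\<lambda>(a, w). (f a, w)) (B \<times> M) (\<lambda>(b, w). (g b, w))"
proof -
  obtain h where h: "bij_betw h A B" "\<forall>x\<in>A. h (f x) = g (h x)" using assms(1) unfolding fg_iso_def by blast
  show ?thesis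
  proof (rule fg_isoI[of "map_prod h e"])
    show "bij_betw (map_prod h e) (A \<times> L) (B \<times> M)" by (rule bij_betw_map_prod[OF h(1) assms(2)])
    fix x assume "x \<in> A \<times> L"
    then show "map_prod h e ((\<lambda>(a, w). (f a, w)) x) = (\<lambda>(b, w). (g b, w)) (map_prod h e x)"
      using h(2) by (cases x) simp
  qed
qed

lemma fg_iso_Union:
  assumes iso: "\<And>i. i \<in> I \<Longrightarrow> fg_iso (V i) f (W i) g"
    and inv: "\<And>i x. i \<in> I \<Longrightarrow> x \<in> V i \<Longrightarrow> f x \<in> V i"
    and dV: "\<And>i j x. i \<in> I \<Longrightarrow> j \<in> I \<Longrightarrow> x \<in> V i \<Longrightarrow> x \<in> V j \<Longrightarrow> i = j"
    and dW: "\<And>i j x. i \<in> I \<Longrightarrow> j \<in> I \<Longrightarrow> x \<in> W i \<Longrightarrow> x \<in> W j \<Longrightarrow> i = j"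
  shows "fg_iso (\<Union>i\<in>I. V i) f (\<Union>i\<in>I. W i) g"
proof -
  have "\<forall>i\<in>I. \<exists>h. bij_betw h (V i) (W i) \<and> (\<forall>x\<in>V i. h (f x) = g (h x))"
    using iso unfolding fg_iso_def by blast
  from bchoice[OF this] obtain H where H: "\<forall>i\<in>I. bij_betw (H i) (V i) (W i) \<and> (\<forall>x\<in>V i. H i (f x) = g (H i x))"
    by blast
  have Hb: "bij_betw (H i) (V i) (W i)" if "i \<in> I" for i using H that by blast
  have Hc: "H i (f x) = g (H i x)" if "i \<in> I" "x \<in> V i" for i x using H that by blast
  have Hin: "H i x \<in> W i" if "i \<in> I" "x \<in> V i" for i x using Hb[OF that(1)] that(2) bij_betwE by blast
  define idx where "idx x = (THE i. i \<in> I \<and> x \<in> V i)" for x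
  have idx: "idx x = i" if "i \<in> I" "x \<in> V i" for i x
    unfolding idx_def
  proof (rule the_equality)
    show "i \<in> I \<and> x \<in> V i" using that by simp
    fix j assume "j \<in> I \<and> x \<in> V j"
    then show "j = i" using dV that by blast
  qed
  show ?thesis
  proof (rule fg_isoI[of "\<lambda>x. H (idx x) x"])
    show "bij_betw (\<lambda>x. H (idx x) x) (\<Union>i\<in>I. V i) (\<Union>i\<in>I. W i)"
      unfolding bij_betw_def
    proof
      show "inj_on (\<lambda>x. H (idx x) x) (\<Union>i\<in>I. V i)"
      proof (rule inj_onI)
        fix x y assume "x \<in> (\<Union>i\<in>I. V i)" "y \<in> (\<Union>i\<in>I. V i)" and eq: "H (idx x) x = H (idx y) y"
        then obtain i j where ij: "i \<in> I" "x \<in> V i" "j \<in> I" "y \<in> V j" by blast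
        have eq2: "H i x = H j y" using eq idx[OF ij(1,2)] idx[OF ij(3,4)] by simp
        have "H i x \<in> W i" "H j y \<in> W j" using Hin ij by auto
        then have "i = j" using dW[OF ij(1) ij(3)] eq2 by simp
        then have "H i x = H i y" "y \<in> V i" using eq2 ij by auto
        moreover have "inj_on (H i) (V i)" using Hb[OF ij(1)] by (simp add: bij_betw_def)
        ultimately show "x = y" using ij(2) by (simp add: inj_on_def)
      qed
      show "(\<lambda>x. H (idx x) x) ` (\<Union>i\<in>I. V i) = (\<Union>i\<in>I. W i)"
      proof (intro equalityI subsetI)
        fix y assume "y \<in> (\<lambda>x. H (idx x) x) ` (\<Union>i\<in>I. V i)"
        then obtain i x where ix: "i \<in> I" "x \<in> V i" "y = H (idx x) x" by blast
        then have "y = H i x" using idx by simp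
        then show "y \<in> (\<Union>i\<in>I. W i)" using Hin ix by blast
      next
        fix y assume "y \<in> (\<Union>i\<in>I. W i)"
        then obtain i where i: "i \<in> I" "y \<in> W i" by blast
        then have "y \<in> H i ` V i" using Hb[OF i(1)] by (simp add: bij_betw_def)
        then obtain x where x: "x \<in> V i" "y = H i x" by blast
        then have "y = H (idx x) x" using idx[OF i(1) x(1)] by simp
        then show "y \<in> (\<lambda>x. H (idx x) x) ` (\<Union>i\<in>I. V i)" using i x by blast
      qed
    qed
  next
    fix x assume "x \<in> (\<Union>i\<in>I. V i)"
    then obtain i where i: "i \<in> I" "x \<in> V i" by blast
    then have "idx (f x) = i" "idx x = i" using idx inv by auto
    then show "H (idx (f x)) (f x) = g (H (idx x) x)" using Hc i by simp
  qed
qed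


lemma tree_map_in: "t \<in> tree_verts s \<Longrightarrow> tree_map t \<in> tree_verts s"
  by (cases t rule: tree_map.cases) (auto simp: tree_verts_def)

lemma cyctree_map_None [simp]: "cyctree_map n (j, None) = (Suc j mod n, None)"
  by (simp add: cyctree_map_def)

lemma cyctree_map_Some [simp]: "cyctree_map n (j, Some xs) = (j, tree_map (Some xs))"
  by (simp add: cyctree_map_def)

lemma GL:
  fixes \<sigma> :: "'b \<Rightarrow> 'b" and P :: "'b set" and n s :: nat
  assumes fin: "finite P" and inj: "inj_on \<sigma> P" and into: "\<sigma> ` P \<subseteq> P" and n: "n > 0"
    and per: "\<And>x. x \<in> P \<Longrightarrow> (\<sigma> ^^ n) x = x"
    and prim: "\<And>x j. x \<in> P \<Longrightarrow> 0 < j \<Longrightarrow> j < n \<Longrightarrow> (\<sigma> ^^ j) x \<noteq> x"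
  shows "fg_iso (P \<times> tree_verts s) (\<lambda>(x, t). (if t = None then \<sigma> x else x, tree_map t))
            ({0..<card P div n} \<times> cyctree_verts n s) (\<lambda>(k, x). (k, cyctree_map n x))"
proof -
  have pin: "(\<sigma> ^^ j) x \<in> P" if "x \<in> P" for j x
    using that by (induction j) (use into in auto)
  have pinj: "inj_on (\<sigma> ^^ j) P" for j
  proof (induction j)
    case 0 then show ?case by simp
  next
    case (Suc j)
    have "inj_on \<sigma> ((\<sigma> ^^ j) ` P)" using inj by (rule inj_on_subset) (use pin in auto)
    then have "inj_on (\<sigma> \<circ> (\<sigma> ^^ j)) P" using Suc comp_inj_on by blast
    then show ?case by (simp add: comp_def)
  qed
  have pmult: "(\<sigma> ^^ (n * k)) x = x" if "x \<in> P" for k x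
  proof (induction k)
    case 0 then show ?case by simp
  next
    case (Suc k)
    have "(\<sigma> ^^ (n * Suc k)) x = (\<sigma> ^^ n) ((\<sigma> ^^ (n * k)) x)"
      by (simp add: funpow_add)
    then show ?case using Suc per that by simp
  qed
  have pmod: "(\<sigma> ^^ j) x = (\<sigma> ^^ (j mod n)) x" if "x \<in> P" for j x
  proof -
    have "(\<sigma> ^^ j) x = (\<sigma> ^^ (j mod n + n * (j div n))) x" by simp
    also have "\<dots> = (\<sigma> ^^ (j mod n)) ((\<sigma> ^^ (n * (j div n))) x)" by (simp only: funpow_add o_apply)
    also have "\<dots> = (\<sigma> ^^ (j mod n)) x" using pmult that by simp
    finally show ?thesis .
  qed
  have claimA: "i = j" if "x \<in> P" "i < n" "j < n" "(\<sigma> ^^ i) x = (\<sigma> ^^ j) x" for x i j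
  proof (rule ccontr)
    assume ne: "i \<noteq> j"
    have gen: "False" if "x \<in> P" "a < b" "b < n" "(\<sigma> ^^ a) x = (\<sigma> ^^ b) x" for a b
    proof -
      have "b = a + (b - a)" using that by simp
      then have "(\<sigma> ^^ b) x = (\<sigma> ^^ (a + (b - a))) x" by simp
      also have "\<dots> = (\<sigma> ^^ a) ((\<sigma> ^^ (b - a)) x)" by (simp only: funpow_add o_apply)
      finally have "(\<sigma> ^^ b) x = (\<sigma> ^^ a) ((\<sigma> ^^ (b - a)) x)" .
      with that have "(\<sigma> ^^ a) x = (\<sigma> ^^ a) ((\<sigma> ^^ (b - a)) x)" by simp
      then have "x = (\<sigma> ^^ (b - a)) x" using pinj[of a] pin that(1) by (auto simp: inj_on_def)
      moreover have "b - a < n" "0 < b - a" using that by auto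
      ultimately show False using prim[of x "b - a"] that(1) by simp
    qed
    show False
    proof (cases "i < j")
      case True then show ?thesis using gen that by blast
    next
      case False then have "j < i" using ne by simp
      then show ?thesis using gen[of j i] that by simp
    qed
  qed
  define orb where "orb x = (\<lambda>j. (\<sigma> ^^ j) x) ` {0..<n}" for x
  have self: "x \<in> orb x" for x unfolding orb_def using n by force
  have orb_sub: "orb y \<subseteq> orb x" if xy: "x \<in> P" "y \<in> orb x" for x y
  proof
    fix z assume "z \<in> orb y"
    then obtain j where j: "j < n" "z = (\<sigma> ^^ j) y" unfolding orb_def by auto
    obtain i where i: "i < n" "y = (\<sigma> ^^ i) x" using xy(2) unfolding orb_def by auto
    have "z = (\<sigma> ^^ (j + i)) x" using i j by (simp add: funpow_add)
    also have "\<dots> = (\<sigma> ^^ ((j + i) mod n)) x" using pmod xy(1) by blast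
    finally show "z \<in> orb x" unfolding orb_def using n by auto
  qed
  have orb_back: "x \<in> orb y" if xy: "x \<in> P" "y \<in> orb x" for x y
  proof -
    obtain i where i: "i < n" "y = (\<sigma> ^^ i) x" using xy(2) unfolding orb_def by auto
    have "(\<sigma> ^^ ((n - i) mod n)) y = (\<sigma> ^^ ((n - i) mod n + i)) x" using i by (simp add: funpow_add)
    also have "\<dots> = (\<sigma> ^^ (((n - i) mod n + i) mod n)) x" using pmod xy(1) by blast
    also have "((n - i) mod n + i) mod n = 0" using i by (simp add: mod_add_left_eq)
    finally have "x = (\<sigma> ^^ ((n - i) mod n)) y" by simp
    then show ?thesis unfolding orb_def using n by auto
  qed
  have orb_P: "orb x \<subseteq> P" if "x \<in> P" for x using pin that unfolding orb_def by auto
  have orb_eq: "orb y = orb x" if "x \<in> P" "y \<in> orb x" for x y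
    using orb_sub[OF that] orb_sub[of y x] orb_back[OF that] orb_P[OF that(1)] that by blast
  define rep where "rep x = (SOME z. z \<in> orb x)" for x
  have rep_in: "rep x \<in> orb x" for x unfolding rep_def using self by (rule someI)
  define R where "R = rep ` P"
  have R_P: "R \<subseteq> P" unfolding R_def using rep_in orb_P by blast
  have rep_R: "rep \<rho> = \<rho>" if rho: "\<rho> \<in> R" for \<rho>
  proof -
    obtain x where x: "x \<in> P" "\<rho> = rep x" using rho R_def by auto
    have "orb \<rho> = orb x" using orb_eq x rep_in by blast
    then show ?thesis unfolding rep_def x(2) by simp
  qed
  define \<Phi> where "\<Phi> = (\<lambda>(\<rho>, j). (\<sigma> ^^ j) \<rho>)"
  have \<Phi>bij: "bij_betw \<Phi> (R \<times> {0..<n}) P"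
    unfolding bij_betw_def
  proof
    show "inj_on \<Phi> (R \<times> {0..<n})"
    proof (rule inj_onI)
      fix a b assume a: "a \<in> R \<times> {0..<n}" and b: "b \<in> R \<times> {0..<n}" and eq: "\<Phi> a = \<Phi> b"
      obtain \<rho> i where ai: "a = (\<rho>, i)" "\<rho> \<in> R" "i < n" using a by auto
      obtain \<rho>' j where bj: "b = (\<rho>', j)" "\<rho>' \<in> R" "j < n" using b by auto
      have z: "(\<sigma> ^^ i) \<rho> = (\<sigma> ^^ j) \<rho>'" using eq ai bj \<Phi>_def by simp
      have "(\<sigma> ^^ i) \<rho> \<in> orb \<rho>" "(\<sigma> ^^ j) \<rho>' \<in> orb \<rho>'" unfolding orb_def using ai bj by auto
      then have "orb \<rho> = orb \<rho>'" using z orb_eq R_P ai bj by (metis subsetD)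
      then have "\<rho> = \<rho>'" using rep_R ai bj unfolding rep_def by metis
      moreover then have "i = j" using claimA[of \<rho> i j] z ai bj R_P by auto
      ultimately show "a = b" using ai bj by simp
    qed
    show "\<Phi> ` (R \<times> {0..<n}) = P"
    proof (intro equalityI subsetI)
      fix z assume "z \<in> \<Phi> ` (R \<times> {0..<n})"
      then show "z \<in> P" using pin R_P unfolding \<Phi>_def by auto
    next
      fix x assume x: "x \<in> P"
      have "rep x \<in> R" unfolding R_def using x by simp
      moreover have "x \<in> orb (rep x)" using orb_eq[OF x rep_in] self by simp
      then obtain j where "j < n" "x = (\<sigma> ^^ j) (rep x)" unfolding orb_def by auto
      ultimately show "x \<in> \<Phi> ` (R \<times> {0..<n})" unfolding \<Phi>_def by force
    qed
  qed
  have finR: "finite R" using fin R_P finite_subset by blast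
  have cardP: "card P = card R * n" using bij_betw_same_card[OF \<Phi>bij] by (simp add: card_cartesian_product)
  have m: "card P div n = card R" using cardP n by simp
  obtain e where e: "bij_betw e {0..<card R} R" using ex_bij_betw_nat_finite[OF finR] by blast
  define \<Psi> where "\<Psi> = (\<lambda>(k, j, t::bool list option). ((\<sigma> ^^ j) (e k), t))"
  have reassoc: "bij_betw (\<lambda>(k, j, t). ((k, j), t)) ({0..<card R} \<times> ({0..<n} \<times> tree_verts s))
      (({0..<card R} \<times> {0..<n}) \<times> tree_verts s)"
    by (rule bij_betw_byWitness[where f'="\<lambda>((k, j), t). (k, j, t)"]) auto
  have \<Phi>': "bij_betw (\<lambda>(k, j). (\<sigma> ^^ j) (e k)) ({0..<card R} \<times> {0..<n}) P"
  proof -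
    have "bij_betw (map_prod e id) ({0..<card R} \<times> {0..<n}) (R \<times> {0..<n})"
      by (rule bij_betw_map_prod[OF e bij_betw_id])
    from bij_betw_trans[OF this \<Phi>bij] show ?thesis
      by (simp add: \<Phi>_def comp_def case_prod_unfold map_prod_def)
  qed
  have \<Psi>bij: "bij_betw \<Psi> ({0..<card R} \<times> cyctree_verts n s) (P \<times> tree_verts s)"
  proof -
    have "bij_betw (map_prod (\<lambda>(k, j). (\<sigma> ^^ j) (e k)) id) (({0..<card R} \<times> {0..<n}) \<times> tree_verts s) (P \<times> tree_verts s)"
      by (rule bij_betw_map_prod[OF \<Phi>' bij_betw_id])
    from bij_betw_trans[OF reassoc this] show ?thesis
      by (simp add: \<Psi>_def cyctree_verts_def comp_def case_prod_unfold map_prod_def)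
  qed
  have "fg_iso ({0..<card R} \<times> cyctree_verts n s) (\<lambda>(k, x). (k, cyctree_map n x))
      (P \<times> tree_verts s) (\<lambda>(x, t). (if t = None then \<sigma> x else x, tree_map t))"
  proof (rule fg_isoI[OF \<Psi>bij])
    fix a assume a: "a \<in> {0..<card R} \<times> cyctree_verts n s"
    then obtain k j t where kjt: "a = (k, j, t)" "k < card R" "j < n" by (auto simp: cyctree_verts_def)
    have ek: "e k \<in> P" using e kjt R_P bij_betwE by fastforce
    show "\<Psi> ((\<lambda>(k, x). (k, cyctree_map n x)) a) = (\<lambda>(x, t). (if t = None then \<sigma> x else x, tree_map t)) (\<Psi> a)"
    proof (cases t)
      case None
      have "(\<sigma> ^^ (Suc j mod n)) (e k) = (\<sigma> ^^ Suc j) (e k)" using pmod[OF ek, of "Suc j"] by simp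
      then show ?thesis using None kjt by (simp add: \<Psi>_def)
    next
      case (Some xs)
      then show ?thesis using kjt by (simp add: \<Psi>_def)
    qed
  qed
  then have "fg_iso (P \<times> tree_verts s) (\<lambda>(x, t). (if t = None then \<sigma> x else x, tree_map t))
      ({0..<card R} \<times> cyctree_verts n s) (\<lambda>(k, x). (k, cyctree_map n x))"
    by (rule fg_iso_sym) (auto simp: cyctree_verts_def cyctree_map_def tree_map_in split: option.splits)
  then show ?thesis using m by simp
qed

fun bval :: "bool list \<Rightarrow> nat" where
  "bval [] = 0"
| "bval (b # xs) = (if b then 2 ^ length xs else 0) + bval xs"

lemma bval_lt: "bval xs < 2 ^ length xs"
  by (induction xs) auto

lemma bval_inj: "length xs = length ys \<Longrightarrow> bval xs = bval ys \<Longrightarrow> xs = ys"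
proof (induction xs arbitrary: ys)
  case Nil then show ?case by simp
next
  case (Cons a xs)
  then obtain b zs where ys: "ys = b # zs" "length zs = length xs" by (cases ys) auto
  have l1: "bval xs < 2 ^ length xs" "bval zs < 2 ^ length xs" using bval_lt[of xs] bval_lt[of zs] ys(2) by simp_all
  have "a = b" using Cons.prems l1 ys by (cases a; cases b) auto
  then have "bval xs = bval zs" using Cons.prems ys by (auto split: if_splits)
  then show ?case using Cons.IH ys \<open>a = b\<close> by simp
qed

definition tv :: "nat \<Rightarrow> bool list option \<Rightarrow> nat" where
  "tv s t = (case t of None \<Rightarrow> 0 | Some xs \<Rightarrow> 2 ^ (s - Suc (length xs)) * (2 * bval xs + 1))"

definition dep :: "bool list option \<Rightarrow> nat" where
  "dep t = (case t of None \<Rightarrow> 0 | Some xs \<Rightarrow> Suc (length xs))"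

lemma tv_Some_lt:
  assumes "length xs < s"
  shows "tv s (Some xs) < 2 ^ s"
proof -
  define a where "a = s - Suc (length xs)"
  have s: "s = a + Suc (length xs)" using assms unfolding a_def by simp
  have h: "2 * bval xs + 1 < 2 ^ Suc (length xs)" using bval_lt[of xs] by simp
  have "2 ^ a * (2 * bval xs + 1) < 2 ^ a * 2 ^ Suc (length xs)"
    by (intro mult_strict_left_mono h) simp
  moreover have "tv s (Some xs) = 2 ^ a * (2 * bval xs + 1)" unfolding tv_def s by simp
  moreover have "(2::nat) ^ s = 2 ^ a * 2 ^ Suc (length xs)" unfolding s by (simp only: power_add)
  ultimately show ?thesis by simp
qed

lemma tv_lt: "t \<in> tree_verts s \<Longrightarrow> tv s t < 2 ^ s"
proof (cases t)
  case None then show ?thesis by (simp add: tv_def)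
next
  case (Some xs)
  assume "t \<in> tree_verts s"
  then have "length xs < s" using Some by (auto simp: tree_verts_def)
  then show ?thesis using Some tv_Some_lt by simp
qed

lemma tv_map:
  assumes "t \<in> tree_verts s"
  shows "tv s (tree_map t) = 2 * tv s t mod 2 ^ s"
proof (cases t rule: tree_map.cases)
  case 1 then show ?thesis by (simp add: tv_def)
next
  case 2
  then have "s \<ge> 1" using assms by (auto simp: tree_verts_def)
  then obtain a where s: "s = Suc a" by (cases s) auto
  show ?thesis using 2 s by (simp add: tv_def)
next
  case (3 b xs)
  then have "Suc (length xs) < s" using assms by (auto simp: tree_verts_def)
  define a where "a = s - Suc (Suc (length xs))"
  have s: "s = a + Suc (Suc (length xs))" using \<open>Suc (length xs) < s\<close> unfolding a_def by simp
  define L where "L = length xs"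
  define v where "v = bval xs"
  have lt: "tv s (Some xs) < 2 ^ s" using tv_Some_lt[of xs s] \<open>Suc (length xs) < s\<close> by simp
  have t1: "tv s (Some (b # xs)) = 2 ^ a * (2 * ((if b then 2 ^ L else 0) + v) + 1)"
    unfolding tv_def s L_def v_def by simp
  have t2: "tv s (Some xs) = 2 ^ Suc a * (2 * v + 1)"
    unfolding tv_def s L_def v_def by simp
  have "2 * tv s (Some (b # xs)) = tv s (Some xs) + (if b then 2 ^ s else 0)"
  proof (cases b)
    case True
    have "2 * (2 ^ a * (2 * (2 ^ L + v) + 1)) = 2 ^ Suc a * (2 * v + 1) + 2 ^ a * 2 ^ L * 4"
      by (simp add: algebra_simps)
    moreover have "2 ^ s = (2::nat) ^ a * 2 ^ L * 4" unfolding s L_def by (simp add: power_add)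
    ultimately show ?thesis using True t1 t2 by simp
  next
    case False
    then show ?thesis using t1 t2 by simp
  qed
  then have "2 * tv s (Some (b # xs)) mod 2 ^ s = tv s (Some xs) mod 2 ^ s"
    by simp
  then show ?thesis using 3 lt by simp
qed

lemma pow2_odd_unique:
  "2 ^ a * (2 * m + 1) = 2 ^ b * (2 * m' + 1) \<Longrightarrow> a = b \<and> m = m'" for a b m m' :: nat
proof (induction a arbitrary: b)
  case 0
  then show ?case
  proof (cases b)
    case 0 then show ?thesis using "0.prems" by simp
  next
    case (Suc b')
    have o: "odd (2 ^ 0 * (2 * m + 1))" by simp
    have "odd (2 ^ b * (2 * m' + 1))" using o unfolding "0.prems" .
    then show ?thesis using Suc by simp
  qed
next
  case (Suc a)
  show ?case
  proof (cases b)
    case 0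
    have o: "odd (2 ^ b * (2 * m' + 1))" using 0 by simp
    have "odd (2 ^ Suc a * (2 * m + 1))" using o unfolding Suc.prems .
    then show ?thesis by simp
  next
    case (Suc b')
    then have "2 ^ a * (2 * m + 1) = 2 ^ b' * (2 * m' + 1)" using Suc.prems by simp
    then show ?thesis using Suc.IH Suc by simp
  qed
qed

lemma tv_inj: "inj_on (tv s) (tree_verts s)"
proof (rule inj_onI)
  fix t u assume t: "t \<in> tree_verts s" and u: "u \<in> tree_verts s" and eq: "tv s t = tv s u"
  show "t = u"
  proof (cases t)
    case None
    then show ?thesis using eq by (cases u) (auto simp: tv_def)
  next
    case (Some xs)
    then obtain ys where u': "u = Some ys" using eq by (cases u) (auto simp: tv_def)
    have l: "length xs < s" "length ys < s" using t u Some u' by (auto simp: tree_verts_def)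
    have "s - Suc (length xs) = s - Suc (length ys) \<and> bval xs = bval ys"
      using eq Some u' by (intro pow2_odd_unique) (simp add: tv_def)
    then have "length xs = length ys" "bval xs = bval ys" using l by auto
    then show ?thesis using bval_inj Some u' by simp
  qed
qed

lemma card_lists_lt: "card {xs :: bool list. length xs < s} = 2 ^ s - 1"
proof (induction s)
  case 0 then show ?case by simp
next
  case (Suc s)
  have eq: "{xs :: bool list. length xs < Suc s} = {xs. length xs < s} \<union> {xs. length xs = s}" by auto
  have f1: "finite {xs :: bool list. length xs < s}"
    using finite_lists_length_le[of "UNIV :: bool set" s] by (auto elim: finite_subset[rotated])
  have c2: "card {xs :: bool list. length xs = s} = 2 ^ s"
    using card_lists_length_eq[of "UNIV :: bool set" s] by simp
  have f2: "finite {xs :: bool list. length xs = s}"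
    using finite_lists_length_eq[of "UNIV :: bool set" s] by simp
  have "card {xs :: bool list. length xs < Suc s} = card {xs :: bool list. length xs < s} + card {xs :: bool list. length xs = s}"
    unfolding eq by (rule card_Un_disjoint[OF f1 f2]) auto
  also have "\<dots> = 2 ^ s - 1 + 2 ^ s" using Suc c2 by simp
  also have "\<dots> = 2 ^ Suc s - 1" using one_le_power[of 2 s] by simp
  finally show ?case .
qed

lemma card_tree_verts: "card (tree_verts s) = 2 ^ s"
proof -
  have f1: "finite {xs :: bool list. length xs < s}"
    using finite_lists_length_le[of "UNIV :: bool set" s] by (auto elim: finite_subset[rotated])
  have "card (tree_verts s) = Suc (card (Some ` {xs :: bool list. length xs < s}))"
    unfolding tree_verts_def by (rule card_insert_disjoint) (use f1 in auto)
  also have "card (Some ` {xs :: bool list. length xs < s}) = 2 ^ s - 1"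
    by (simp add: card_image card_lists_lt)
  finally show ?thesis using one_le_power[of 2 s] by simp
qed

lemma finite_tree_verts: "finite (tree_verts s)"
  using card_tree_verts[of s] by (metis card.infinite power_not_zero zero_neq_numeral)

lemma bij_by_card:
  assumes "inj_on h A" "h ` A \<subseteq> B" "finite B" "card A = card B"
  shows "bij_betw h A B"
  unfolding bij_betw_def
proof
  show "inj_on h A" by fact
  have "card (h ` A) = card B" using assms(1,4) card_image by metis
  then show "h ` A = B" using card_subset_eq[OF assms(3) assms(2)] by simp
qed

lemma dep_tree_map_Some: "dep (tree_map (Some xs)) = length xs"
  by (cases xs) (simp_all add: dep_def)

lemma NT:
  fixes N r s :: nat
  assumes N: "N = 2 ^ s * r" and r: "odd r"
  shows "fg_iso {0..<N} (\<lambda>k. 2 * k mod N) ({0..<r} \<times> tree_verts s)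
           (\<lambda>(y, t). (if t = None then 2 * y mod r else y, tree_map t))"
proof -
  have r0: "r > 0" using r by (cases r) auto
  define \<mu> where "\<mu> = (r + 1) div 2"
  have mu2: "2 * \<mu> = r + 1" unfolding \<mu>_def using r by simp
  have cop: "coprime \<mu> r"
  proof -
    have "coprime (r + 1) r" by simp
    then have "coprime (2 * \<mu>) r" using mu2 by simp
    then show ?thesis by simp
  qed
  define Q where "Q = {0..<r} \<times> tree_verts s"
  define P2 where "P2 = {0..<(2::nat) ^ s} \<times> {0..<r}"
  define Gq where "Gq = (\<lambda>(y, t). (if t = None then 2 * y mod r else y, tree_map t))"
  define D2 where "D2 = (\<lambda>(v::nat, y::nat). (2 * v mod 2 ^ s, 2 * y mod r))"
  define H where "H = (\<lambda>(y, t). (tv s t, y * \<mu> ^ dep t mod r))"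
  have Hinj: "inj_on H Q"
  proof (rule inj_onI)
    fix a b assume a: "a \<in> Q" and b: "b \<in> Q" and eq: "H a = H b"
    obtain y t where yt: "a = (y, t)" "y < r" "t \<in> tree_verts s" using a Q_def by auto
    obtain y' t' where yt': "b = (y', t')" "y' < r" "t' \<in> tree_verts s" using b Q_def by auto
    have "tv s t = tv s t'" using eq yt yt' H_def by simp
    then have tt: "t = t'" using tv_inj[of s] yt yt' by (auto simp: inj_on_def)
    have "y * \<mu> ^ dep t mod r = y' * \<mu> ^ dep t mod r" using eq yt yt' tt H_def by simp
    then have "[y * \<mu> ^ dep t = y' * \<mu> ^ dep t] (mod r)" by (simp add: cong_def)
    moreover have "coprime (\<mu> ^ dep t) r" using cop by simp
    ultimately have "[y = y'] (mod r)" using cong_mult_rcancel_nat by blast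
    then have "y = y'" using yt yt' by (simp add: cong_def)
    then show "a = b" using yt yt' tt by simp
  qed
  have Himg: "H ` Q \<subseteq> P2"
    using tv_lt r0 unfolding H_def Q_def P2_def by auto
  have cQ: "card Q = card P2"
    unfolding Q_def P2_def by (simp add: card_cartesian_product card_tree_verts)
  have Hbij: "bij_betw H Q P2" using bij_by_card[OF Hinj Himg _ cQ] P2_def by simp
  have iso1: "fg_iso Q Gq P2 D2"
  proof (rule fg_isoI[OF Hbij])
    fix a assume "a \<in> Q"
    then obtain y t where yt: "a = (y, t)" "y < r" "t \<in> tree_verts s" using Q_def by auto
    show "H (Gq a) = D2 (H a)"
    proof (cases t)
      case None
      then show ?thesis using yt by (simp add: H_def Gq_def D2_def tv_def dep_def mod_mult_right_eq)
    next
      case (Some xs)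
      have first: "tv s (tree_map t) = 2 * tv s t mod 2 ^ s" using tv_map yt(3) by blast
      have "2 * (y * \<mu> ^ Suc (length xs) mod r) mod r = (y * \<mu> ^ length xs) * (2 * \<mu>) mod r"
        by (simp add: mod_mult_right_eq algebra_simps)
      also have "\<dots> = (y * \<mu> ^ length xs) * (r + 1) mod r" using mu2 by simp
      also have "\<dots> = (y * \<mu> ^ length xs) mod r" by (simp add: algebra_simps)
      finally have second: "y * \<mu> ^ length xs mod r = 2 * (y * \<mu> ^ Suc (length xs) mod r) mod r" by simp
      show ?thesis using Some yt first second
        by (simp add: H_def Gq_def D2_def dep_tree_map_Some) (simp add: dep_def)
    qed
  qed
  have GqQ: "\<forall>x\<in>Q. Gq x \<in> Q"
    using tree_map_in r0 unfolding Gq_def Q_def by auto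
  have iso2: "fg_iso P2 D2 Q Gq" by (rule fg_iso_sym[OF iso1 GqQ])
  define C where "C = (\<lambda>k::nat. (k mod 2 ^ s, k mod r))"
  have copN: "coprime ((2::nat) ^ s) r" using r by simp
  have Cinj: "inj_on C {0..<N}"
  proof (rule inj_onI)
    fix k k' assume k: "k \<in> {0..<N}" and k': "k' \<in> {0..<N}" and eq: "C k = C k'"
    have "[k = k'] (mod 2 ^ s)" "[k = k'] (mod r)" using eq C_def by (auto simp: cong_def)
    then have "[k = k'] (mod N)" using coprime_cong_mult_nat copN N by blast
    then show "k = k'" using k k' by (simp add: cong_def)
  qed
  have Cimg: "C ` {0..<N} \<subseteq> P2" using r0 unfolding C_def P2_def by auto
  have cN: "card {0..<N} = card P2" unfolding P2_def N by (simp add: card_cartesian_product)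
  have Cbij: "bij_betw C {0..<N} P2" using bij_by_card[OF Cinj Cimg _ cN] P2_def by simp
  have iso3: "fg_iso {0..<N} (\<lambda>k. 2 * k mod N) P2 D2"
  proof (rule fg_isoI[OF Cbij])
    fix k assume "k \<in> {0..<N}"
    have d1: "2 ^ s dvd N" "r dvd N" using N by auto
    show "C (2 * k mod N) = D2 (C k)"
      unfolding C_def D2_def using d1 by (simp add: mod_mod_cancel mod_mult_right_eq)
  qed
  have NN: "\<forall>x\<in>{0..<N}. 2 * x mod N \<in> {0..<N}" by auto
  show ?thesis using fg_iso_trans[OF iso3 iso2 NN] unfolding Q_def Gq_def by simp
qed

lemma gcd_double_mod:
  fixes y r :: nat
  assumes "odd r"
  shows "gcd (2 * y mod r) r = gcd y r"
proof -
  have "gcd (2 * y mod r) r = gcd (2 * y) r" using gcd_red_nat[of "2 * y" r] by (simp add: gcd.commute)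
  also have "\<dots> = gcd y r" using assms by (intro gcd_mult_left_left_cancel) simp
  finally show ?thesis .
qed

lemma pow_double_mod: "y < r \<Longrightarrow> ((\<lambda>(y, w). (2 * y mod r, w)) ^^ j) (y, w) = (2 ^ j * y mod r, w)" for r :: nat
proof (induction j)
  case 0 then show ?case by simp
next
  case (Suc j)
  then show ?case by (simp add: mod_mult_right_eq mult.assoc)
qed

lemma key_cong:
  fixes y r :: nat
  assumes r0: "r > 0" and y: "y < r"
  shows "2 ^ j * y mod r = y \<longleftrightarrow> ord (r div gcd y r) 2 dvd j"
proof -
  define g where "g = gcd y r"
  define d where "d = r div g"
  have g0: "g > 0" unfolding g_def using r0 by simp
  have "g dvd y" unfolding g_def by simp
  then obtain u where u: "y = g * u" by (elim dvdE)
  have rgd: "r = g * d" unfolding d_def g_def by simp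
  have "g * gcd u d = gcd (g * u) (g * d)" by (rule gcd_mult_distrib_nat)
  also have "\<dots> = gcd y r" by (simp only: u[symmetric] rgd[symmetric])
  also have "\<dots> = g" by (simp add: g_def)
  finally have e: "g * gcd u d = g * 1" by simp
  have g0': "g \<noteq> 0" using g0 by simp
  have "gcd u d = 1" using mult_left_cancel[OF g0', of "gcd u d" 1] e by blast
  then have cop: "coprime u d" by (simp only: coprime_iff_gcd_eq_1)
  have e1: "2 ^ j * y = (2 ^ j * u) * g" using u by simp
  have e2: "r = d * g" using rgd by simp
  have A: "2 ^ j * y mod r = (2 ^ j * u mod d) * g" unfolding e1 e2 by (rule mod_mult_mult2)
  have B: "y mod r = (u mod d) * g" unfolding e2 u by (simp only: mult.commute[of g u] mod_mult_mult2)
  have "2 ^ j * y mod r = y \<longleftrightarrow> 2 ^ j * y mod r = y mod r" using y by simp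
  also have "\<dots> \<longleftrightarrow> (2 ^ j * u mod d) * g = (u mod d) * g" unfolding A B ..
  also have "\<dots> \<longleftrightarrow> 2 ^ j * u mod d = u mod d" using g0 by simp
  also have "\<dots> \<longleftrightarrow> [2 ^ j * u = 1 * u] (mod d)" by (simp add: cong_def)
  also have "\<dots> \<longleftrightarrow> [2 ^ j = 1] (mod d)" using cop cong_mult_rcancel_nat[of u d "2 ^ j" 1] by (simp add: coprime_commute)
  also have "\<dots> \<longleftrightarrow> ord d 2 dvd j" by (rule ord_divides)
  finally show ?thesis unfolding d_def g_def .
qed

lemma card_Pd:
  fixes r d :: nat
  assumes r0: "r > 0" and d: "d dvd r"
  shows "card {y. y < r \<and> r div gcd y r = d} = totient d"
proof -
  obtain k where k: "r = d * k" using d by blast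
  have k0: "k > 0" "d > 0" using r0 k by auto
  have rk: "r div k = d" "r div d = k" using k k0 by auto
  have eqv: "r div gcd y r = d \<longleftrightarrow> gcd y r = k" for y
  proof
    assume a: "r div gcd y r = d"
    have "gcd y r * (r div gcd y r) = r" by simp
    with a have "gcd y r * d = r" by simp
    also have "r = k * d" using k by simp
    finally have "gcd y r * d = k * d" .
    then show "gcd y r = k" using k0 by simp
  next
    assume "gcd y r = k" then show "r div gcd y r = d" using rk by simp
  qed
  have S: "{y. y < r \<and> r div gcd y r = d} = {y. y < r \<and> gcd y r = k}" using eqv by auto
  have "bij_betw (\<lambda>y. if y = 0 then r else y) {y. y < r \<and> gcd y r = k} {y \<in> {0<..r}. gcd y r = k}"
    by (rule bij_betw_byWitness[where f'="\<lambda>y. if y = r then 0 else y"]) (use r0 in auto)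
  then have "card {y. y < r \<and> gcd y r = k} = card {y \<in> {0<..r}. gcd y r = k}" by (rule bij_betw_same_card)
  also have "\<dots> = totient (r div k)" using card_gcd_eq_totient[OF r0] k by simp
  finally show ?thesis using S rk by simp
qed

lemma ST4:
  fixes q r s :: nat
  assumes r: "odd r"
  shows "fg_iso (({0..<r} \<times> tree_verts s) \<times> {0..<q})
     (\<lambda>(a, w). ((\<lambda>(y, t). (if t = None then 2 * y mod r else y, tree_map t)) a, w))
     {(d, k, x). d dvd r \<and> k < q * totient d div ord d 2 \<and> x \<in> cyctree_verts (ord d 2) s}
     (\<lambda>(d, k, x). (d, k, cyctree_map (ord d 2) x))"
proof -
  have r0: "r > 0" using r by (cases r) auto
  define F :: "(nat \<times> bool list option) \<times> nat \<Rightarrow> (nat \<times> bool list option) \<times> nat"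
    where "F = (\<lambda>(a, w). ((\<lambda>(y, t). (if t = None then 2 * y mod r else y, tree_map t)) a, w))"
  define TG :: "nat \<times> nat \<times> nat \<times> bool list option \<Rightarrow> nat \<times> nat \<times> nat \<times> bool list option"
    where "TG = (\<lambda>(d, k, x). (d, k, cyctree_map (ord d 2) x))"
  define I where "I = {d. d dvd r}"
  define V where "V d = {((y, t), w). y < r \<and> r div gcd y r = d \<and> t \<in> tree_verts s \<and> w < q}" for d
  define W where "W d = {(d', k, x). d' = d \<and> k < q * totient d div ord d 2 \<and> x \<in> cyctree_verts (ord d 2) s}" for d
  have srcU: "({0..<r} \<times> tree_verts s) \<times> {0..<q} = (\<Union>d\<in>I. V d)"
  proof (intro equalityI subsetI)
    fix a assume "a \<in> ({0..<r} \<times> tree_verts s) \<times> {0..<q}"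
    then obtain y t w where a: "a = ((y, t), w)" "y < r" "t \<in> tree_verts s" "w < q" by auto
    have "gcd y r * (r div gcd y r) = r" by simp
    then have "r div gcd y r dvd r" by (metis dvd_triv_right)
    then show "a \<in> (\<Union>d\<in>I. V d)" using a unfolding I_def V_def by auto
  qed (auto simp: V_def)
  have tgtU: "{(d, k, x). d dvd r \<and> k < q * totient d div ord d 2 \<and> x \<in> cyctree_verts (ord d 2) s} = (\<Union>d\<in>I. W d)"
    unfolding I_def W_def by auto
  have per_d: "fg_iso (V d) F (W d) TG" if dI: "d \<in> I" for d
  proof -
    have dr: "d dvd r" using dI I_def by simp
    have dodd: "odd d"
    proof
      assume "even d"
      then have "even r" using dr dvd_trans by blast
      with r show False by simp
    qed
    define n where "n = ord d 2"
    have n0: "n > 0" unfolding n_def using dodd by (simp add: coprime_commute)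
    define Pd where "Pd = {y. y < r \<and> r div gcd y r = d}"
    define P' where "P' = Pd \<times> {0..<q}"
    define \<sigma> where "\<sigma> = (\<lambda>(y::nat, w::nat). (2 * y mod r, w))"
    define F' where "F' = (\<lambda>(x, t). (if t = None then \<sigma> x else x, tree_map t))"
    have finP: "finite P'" unfolding P'_def Pd_def by auto
    have cardP: "card P' = q * totient d" unfolding P'_def Pd_def
      using card_Pd[OF r0 dr] by (simp add: card_cartesian_product)
    have \<sigma>into: "\<sigma> ` P' \<subseteq> P'" unfolding \<sigma>_def P'_def Pd_def using r0 gcd_double_mod[OF r] by auto
    have \<sigma>inj: "inj_on \<sigma> P'"
    proof (rule inj_onI)
      fix a b assume a: "a \<in> P'" and b: "b \<in> P'" and eq: "\<sigma> a = \<sigma> b"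
      obtain y w where yw: "a = (y, w)" "y < r" using a P'_def Pd_def by auto
      obtain y' w' where yw': "b = (y', w')" "y' < r" using b P'_def Pd_def by auto
      have "[2 * y = 2 * y'] (mod r)" "w = w'" using eq yw yw' \<sigma>_def by (auto simp: cong_def)
      moreover have "coprime 2 r" using r by simp
      ultimately have "[y = y'] (mod r)" "w = w'" using cong_mult_lcancel_nat by blast+
      then show "a = b" using yw yw' by (simp add: cong_def)
    qed
    have per: "(\<sigma> ^^ n) x = x" if xP: "x \<in> P'" for x
    proof -
      obtain y w where yw: "x = (y, w)" "y < r" "r div gcd y r = d" using xP P'_def Pd_def by auto
      have "2 ^ n * y mod r = y" using key_cong[OF r0 yw(2), of n] yw(3) n_def by simp
      then show ?thesis using yw pow_double_mod[of y r n w] \<sigma>_def by simp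
    qed
    have prim: "(\<sigma> ^^ j) x \<noteq> x" if xj: "x \<in> P'" "0 < j" "j < n" for x j
    proof
      assume eq: "(\<sigma> ^^ j) x = x"
      obtain y w where yw: "x = (y, w)" "y < r" "r div gcd y r = d" using xj P'_def Pd_def by auto
      have "2 ^ j * y mod r = y" using eq yw pow_double_mod[of y r j w] \<sigma>_def by simp
      then have "n dvd j" using key_cong[OF r0 yw(2), of j] yw(3) n_def by simp
      then show False using xj by (simp add: nat_dvd_not_less)
    qed
    have gl: "fg_iso (P' \<times> tree_verts s) F' ({0..<card P' div n} \<times> cyctree_verts n s) (\<lambda>(k, x). (k, cyctree_map n x))"
      unfolding F'_def by (rule GL[OF finP \<sigma>inj \<sigma>into n0 per prim])
    define \<rho> where "\<rho> = (\<lambda>((y::nat, t::bool list option), w::nat). ((y, w), t))"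
    have \<rho>bij: "bij_betw \<rho> (V d) (P' \<times> tree_verts s)"
      by (rule bij_betw_byWitness[where f'="\<lambda>((y, w), t). ((y, t), w)"])
         (auto simp: \<rho>_def V_def P'_def Pd_def)
    have isoa: "fg_iso (V d) F (P' \<times> tree_verts s) F'"
    proof (rule fg_isoI[OF \<rho>bij])
      fix a assume "a \<in> V d"
      then obtain y t w where "a = ((y, t), w)" unfolding V_def by auto
      then show "\<rho> (F a) = F' (\<rho> a)" by (simp add: \<rho>_def F_def F'_def \<sigma>_def)
    qed
    have FV: "\<forall>x\<in>V d. F x \<in> V d"
      unfolding V_def F_def using r0 gcd_double_mod[OF r] tree_map_in by auto
    have F'P: "\<forall>x\<in>P' \<times> tree_verts s. F' x \<in> P' \<times> tree_verts s"
      using \<sigma>into tree_map_in unfolding F'_def by auto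
    have m: "card P' div ord d 2 = q * totient d div ord d 2" using cardP by simp
    define tg where "tg = (\<lambda>(k::nat, x::nat \<times> bool list option). (d, k, x))"
    have tgbij: "bij_betw tg ({0..<card P' div n} \<times> cyctree_verts n s) (W d)"
      by (rule bij_betw_byWitness[where f'="\<lambda>(d, k, x). (k, x)"]) (auto simp: tg_def W_def m n_def)
    have isoc: "fg_iso ({0..<card P' div n} \<times> cyctree_verts n s) (\<lambda>(k, x). (k, cyctree_map n x)) (W d) TG"
    proof (rule fg_isoI[OF tgbij])
      fix a assume "a \<in> {0..<card P' div n} \<times> cyctree_verts n s"
      then obtain k x where "a = (k, x)" by auto
      then show "tg ((\<lambda>(k, x). (k, cyctree_map n x)) a) = TG (tg a)" by (simp add: tg_def TG_def n_def)
    qed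
    show ?thesis by (rule fg_iso_trans[OF fg_iso_trans[OF isoa gl FV] isoc FV])
  qed
  have inv: "F x \<in> V d" if "d \<in> I" "x \<in> V d" for d x
    using that unfolding V_def F_def using r0 gcd_double_mod[OF r] tree_map_in by auto
  have dV: "i = j" if "i \<in> I" "j \<in> I" "x \<in> V i" "x \<in> V j" for i j x
    using that unfolding V_def by auto
  have dW: "i = j" if "i \<in> I" "j \<in> I" "x \<in> W i" "x \<in> W j" for i j x
    using that unfolding W_def by auto
  have "fg_iso (\<Union>d\<in>I. V d) F (\<Union>d\<in>I. W d) TG"
    by (rule fg_iso_Union[OF per_d inv dV dW])
  then show ?thesis unfolding srcU tgtU F_def TG_def .
qed

lemma fin_field_pow_card:
  fixes x :: "'a :: {finite, field}"
  shows "x ^ card (UNIV :: 'a set) = x"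
proof (cases "x = 0")
  case False
  have "x * (\<Prod>y\<in>UNIV-{0}. x * y) = x * x ^ (card (UNIV :: 'a set) - 1) * \<Prod>(UNIV-{0})"
    by (simp add: prod.distrib mult_ac)
  also have "x * x ^ (card (UNIV :: 'a set) - 1) = x ^ Suc (card (UNIV :: 'a set) - 1)"
    by (subst power_Suc) auto
  also have "Suc (card (UNIV :: 'a set) - 1) = card (UNIV :: 'a set)"
    using finite_UNIV_card_ge_0[where ?'a = 'a] by simp
  also have "(\<Prod>y\<in>UNIV-{0}. x * y) = (\<Prod>y\<in>UNIV-{0}. y)"
    by (rule prod.reindex_bij_witness[of _ "\<lambda>y. y / x" "\<lambda>y. x * y"]) (use False in auto)
  finally show ?thesis
    by simp
qed (use finite_UNIV_card_ge_0[where ?'a = 'a] in auto)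

lemma card_roots_le:
  fixes a b :: "'a :: field"
  assumes "q > 1"
  shows "card {x. x ^ q + a * x + b = 0} \<le> q"
proof -
  define P where "P = monom 1 q + [:b, a:]"
  have dP: "degree P = q"
  proof -
    have "degree [:b, a:] \<le> 1" by simp
    then have "degree [:b, a:] < degree (monom (1::'a) q)" using assms by (simp add: degree_monom_eq)
    then show ?thesis unfolding P_def by (simp add: degree_add_eq_left degree_monom_eq)
  qed
  have P0: "P \<noteq> 0" using dP assms by auto
  have "{x. x ^ q + a * x + b = 0} = {x. poly P x = 0}"
    unfolding P_def by (auto simp: poly_monom algebra_simps)
  then show ?thesis using card_poly_roots_bound[OF P0] dP by simp
qed

definition RT :: "'a::field ring" where
  "RT = \<lparr>carrier = UNIV, monoid.mult = (\<lambda>x y. x * y), one = 1, ring.zero = 0, add = (\<lambda>x y. x + y)\<rparr>"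

lemma field_RT: "field (RT :: 'a::field ring)"
proof -
  have "\<exists>y. x + y = 0" for x :: 'a
    using add.right_inverse by blast
  moreover have "x \<noteq> 0 \<Longrightarrow> \<exists>y. x * y = 1" for x :: 'a
    by (rule exI[of _ "inverse x"]) auto
  ultimately show ?thesis
    unfolding RT_def using add.right_inverse
    by unfold_locales (auto simp: algebra_simps Units_def)
qed

lemma RT_pow: "(x::'a::field) [^]\<^bsub>RT\<^esub> (i::nat) = x ^ i"
  by (induction i) (simp_all add: RT_def)

lemma exists_gen:
  fixes dummy :: "'a :: {finite, field}"
  shows "\<exists>\<gamma>::'a. \<gamma> \<noteq> 0 \<and> (\<forall>x. x \<noteq> 0 \<longrightarrow> (\<exists>i::nat. x = \<gamma> ^ i))"
proof -
  interpret field "RT :: 'a ring" by (rule field_RT)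
  have "finite (carrier (RT :: 'a ring))" by simp
  from finite_field_mult_group_has_gen[OF this] obtain a where
    a: "a \<in> carrier (mult_of (RT :: 'a ring))" "carrier (mult_of (RT :: 'a ring)) = {a [^]\<^bsub>RT\<^esub> i | i::nat. i \<in> UNIV}"
    by blast
  have c: "carrier (mult_of (RT :: 'a ring)) = UNIV - {0}" by (simp add: RT_def)
  show ?thesis
  proof (rule exI[of _ a], intro conjI allI impI)
    show "a \<noteq> 0" using a(1) by (simp add: RT_def)
    fix x :: 'a assume "x \<noteq> 0"
    then have "x \<in> carrier (mult_of (RT :: 'a ring))" using c by simp
    then show "\<exists>i::nat. x = a ^ i" using a(2) by (auto simp: RT_pow)
  qed
qed

lemma count3:
  fixes q k u l :: nat
  assumes q2: "q \<ge> 2" and k: "k \<le> q" and u: "u \<le> q - 1" and l: "l \<le> q" and eq: "q ^ 2 = k + u * l"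
  shows "k = q \<and> u = q - 1 \<and> l = q"
proof -
  have ul: "u * l \<le> (q - 1) * q" using mult_le_mono[OF u l] .
  obtain m where m: "q = Suc m" using q2 by (cases q) auto
  have qq: "q ^ 2 = q + (q - 1) * q" unfolding m by (simp add: power2_eq_square algebra_simps)
  have kq: "k = q" and ul2: "u * l = (q - 1) * q" using eq qq k ul by linarith+
  have uq: "u = q - 1"
  proof (rule ccontr)
    assume "u \<noteq> q - 1"
    then have "u \<le> q - 2" using u by linarith
    then have "u * l \<le> (q - 2) * q" using mult_le_mono[OF _ l] by blast
    moreover have "(q - 2) * q < (q - 1) * q" using q2 by simp
    ultimately show False using ul2 by linarith
  qed
  have "(q - 1) * l = (q - 1) * q" using ul2 uq by simp
  then have "l = q" using q2 by simp
  then show ?thesis using kq uq by simp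
qed

lemma pow_swap: "(x ^ a) ^ b = (x ^ b) ^ a" for x :: "'b::monoid_mult"
  by (metis power_mult mult.commute)

theorem theorem19:
  fixes c :: "'a::{finite,field}" and p e q s r :: nat
  assumes "prime p" and "odd p" and "e \<ge> 1" and "q = p ^ e"
    and "card (UNIV :: 'a set) = q ^ 2"
    and "q - 1 = 2 ^ s * r" and "odd r"
    and "c \<noteq> 0" and "c ^ q = c"
  shows "fg_iso (UNIV :: 'a set) (\<lambda>x. c * (x ^ (q + 1) + x ^ 2))
           (target_verts q s r) (target_map q s)"
proof -
  note pp = assms(1) and podd = assms(2) and e1 = assms(3) and qdef = assms(4)
    and cardA = assms(5) and Nsr = assms(6) and rodd = assms(7) and c0 = assms(8) and cq = assms(9)
  have p3: "p \<ge> 3" using pp podd prime_ge_2_nat[OF pp] by (cases "p = 2") auto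
  have q3: "q \<ge> 3"
  proof -
    have "p ^ 1 \<le> p ^ e" using e1 p3 by (intro power_increasing) auto
    then show ?thesis using p3 qdef by simp
  qed
  have qodd: "odd q" using podd qdef by simp
  define N where "N = q - 1"
  have N0: "N > 0" using q3 N_def by simp
  have cpos: "CHAR('a) > 0" by (rule finite_imp_CHAR_pos) simp
  have cpr: "prime CHAR('a)" using prime_CHAR_semidom[OF cpos] .
  have "CHAR('a) dvd p ^ (2 * e)" using CHAR_dvd_CARD[where ?'a = 'a] cardA qdef by (simp add: power_mult mult.commute)
  then have "CHAR('a) dvd p" using prime_dvd_power[OF cpr] by blast
  then have charp: "CHAR('a) = p" using primes_dvd_imp_eq[OF cpr pp] by blast
  have frob: "(x + y) ^ q = x ^ q + y ^ q" for x y :: 'a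
    using freshmans_dream'[OF cpr, of q e x y] charp qdef by simp
  have frobm: "(x * y) ^ q = x ^ q * y ^ q" for x y :: 'a by (rule power_mult_distrib)
  have frobn: "(- x) ^ q = - (x ^ q)" for x :: 'a using qodd by simp
  have qq: "(x ^ q) ^ q = x" for x :: 'a
  proof -
    have "(x ^ q) ^ q = x ^ (q ^ 2)" by (simp add: power_mult[symmetric] power2_eq_square)
    also have "\<dots> = x" using fin_field_pow_card[of x] cardA by simp
    finally show ?thesis .
  qed
  have trq: "(x ^ q + x) ^ q = x ^ q + x" for x :: 'a using frob qq by (simp add: add.commute)
  have cqi: "(inverse c) ^ q = inverse c" using cq by (simp add: power_inverse)
  define K where "K = {x :: 'a. x ^ q + x = 0}"
  define Fq where "Fq = {x :: 'a. x ^ q = x}"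
  define U where "U = Fq - {0}"
  define L where "L = {w :: 'a. w ^ q + w = inverse c}"
  have q1: "q > 1" using q3 by simp
  have cK: "card K \<le> q"
  proof -
    have "K = {x :: 'a. x ^ q + 1 * x + 0 = 0}" unfolding K_def by simp
    then show ?thesis using card_roots_le[OF q1, of "1::'a" 0] by simp
  qed
  have cFq: "card Fq \<le> q"
  proof -
    have "Fq = {x :: 'a. x ^ q + (-1) * x + 0 = 0}" unfolding Fq_def by (auto simp: algebra_simps)
    then show ?thesis using card_roots_le[OF q1, of "-1::'a" 0] by simp
  qed
  have cL: "card L \<le> q"
  proof -
    have "L = {x :: 'a. x ^ q + 1 * x + (- inverse c) = 0}" unfolding L_def by (auto simp: algebra_simps)
    then show ?thesis using card_roots_le[OF q1, of "1::'a" "- inverse c"] by simp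
  qed
  have zFq: "0 \<in> Fq" unfolding Fq_def using q1 by simp
  have cU: "card U = card Fq - 1" unfolding U_def using zFq by (simp add: card_Diff_singleton)
  have cU': "card U \<le> q - 1" using cU cFq by simp
  define f where "f = (\<lambda>x::'a. c * (x ^ (q + 1) + x ^ 2))"
  define S1 where "S1 = Inl ` K \<union> Inr ` (U \<times> L)"
  define m1 where "m1 = map_sum (\<lambda>_::'a. 0::'a) (\<lambda>(a::'a, w::'a). (a ^ 2, w))"
  define h where "h = (\<lambda>x::'a. if x ^ q + x = 0 then Inl x else Inr (c * (x ^ q + x), x / (c * (x ^ q + x))))"
  define h' where "h' = (\<lambda>z. case z of Inl b \<Rightarrow> b | Inr (a, w) \<Rightarrow> (a * w :: 'a))"
  have hbij: "bij_betw h UNIV S1"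
  proof (rule bij_betw_byWitness[where f'=h'])
    show "\<forall>x\<in>UNIV. h' (h x) = x" using c0 by (auto simp: h_def h'_def)
    show "\<forall>z\<in>S1. h (h' z) = z"
    proof
      fix z assume "z \<in> S1"
      then consider (l) b where "z = Inl b" "b \<in> K" | (r) a w where "z = Inr (a, w)" "a \<in> U" "w \<in> L"
        unfolding S1_def by auto
      then show "h (h' z) = z"
      proof cases
        case l then show ?thesis by (simp add: h_def h'_def K_def)
      next
        case r
        have aq: "a ^ q = a" "a \<noteq> 0" using r unfolding U_def Fq_def by auto
        have wq: "w ^ q + w = inverse c" using r unfolding L_def by auto
        have tr: "(a * w) ^ q + a * w = a * inverse c"
          using aq wq by (simp add: frobm algebra_simps flip: wq)
        have ne: "a * inverse c \<noteq> 0" using aq c0 by simp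
        have "c * (a * inverse c) = a" using c0 by simp
        then show ?thesis using r tr ne aq c0 by (simp add: h_def h'_def)
      qed
    qed
    show "h ` UNIV \<subseteq> S1"
    proof
      fix z assume "z \<in> h ` UNIV"
      then obtain x where x: "z = h x" by blast
      define t where "t = x ^ q + x"
      show "z \<in> S1"
      proof (cases "t = 0")
        case True then show ?thesis using x unfolding h_def S1_def K_def t_def by simp
      next
        case False
        have tq: "t ^ q = t" unfolding t_def by (rule trq)
        have aU: "c * t \<in> U" using tq cq False c0 unfolding U_def Fq_def by (simp add: frobm)
        have "(x / (c * t)) ^ q + x / (c * t) = (x ^ q + x) / (c * t)"
          using tq cq by (simp add: power_divide frobm add_divide_distrib)
        also have "\<dots> = inverse c" using False c0 unfolding t_def[symmetric] by (simp add: field_simps)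
        finally have "x / (c * t) \<in> L" unfolding L_def by simp
        then show ?thesis using x aU False unfolding h_def S1_def t_def by simp
      qed
    qed
    show "h' ` S1 \<subseteq> UNIV" by simp
  qed
  have isoF: "fg_iso UNIV f S1 m1"
  proof (rule fg_isoI[OF hbij])
    fix x :: 'a
    define t where "t = x ^ q + x"
    have fx: "f x = c * x * t" unfolding f_def t_def by (simp add: algebra_simps power2_eq_square)
    have tq: "t ^ q = t" unfolding t_def by (rule trq)
    have p1: "(c * x * t) ^ q = c * x ^ q * t" using tq cq by (simp add: power_mult_distrib)
    have "(f x) ^ q + f x = c * t * (x ^ q + x)" unfolding fx p1 by (simp add: algebra_simps)
    then have trf: "(f x) ^ q + f x = c * t * t" by (simp only: t_def[symmetric])
    show "h (f x) = m1 (h x)"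
    proof (cases "t = 0")
      case True
      then have "f x = 0" using fx by simp
      then show ?thesis using True q1 unfolding h_def m1_def t_def by simp
    next
      case False
      have ne: "c * t * t \<noteq> 0" using False c0 by simp
      have "h (f x) = Inr (c * (c * t * t), f x / (c * (c * t * t)))" unfolding h_def using trf ne by simp
      also have "\<dots> = Inr ((c * t) ^ 2, x / (c * t))"
        using False c0 by (simp add: fx field_simps power2_eq_square)
      also have "\<dots> = m1 (h x)" unfolding h_def m1_def t_def[symmetric] using False by simp
      finally show ?thesis .
    qed
  qed
  have finS: "finite K" "finite (U \<times> L)" by auto
  have "card (UNIV :: 'a set) = card S1" using bij_betw_same_card[OF hbij] .
  also have "card S1 = card K + card U * card L"
  proof -
    have "card S1 = card (Inl ` K :: ('a + 'a \<times> 'a) set) + card (Inr ` (U \<times> L) :: ('a + 'a \<times> 'a) set)"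
      unfolding S1_def by (rule card_Un_disjoint) auto
    also have "\<dots> = card K + card (U \<times> L)" by (simp add: card_image)
    finally show ?thesis by (simp add: card_cartesian_product)
  qed
  finally have "q ^ 2 = card K + card U * card L" using cardA by simp
  then have cards: "card K = q \<and> card U = q - 1 \<and> card L = q"
    using count3[of q "card K" "card U" "card L"] q3 cK cU' cL by simp
  obtain \<gamma> :: 'a where g0: "\<gamma> \<noteq> 0" and gall: "\<And>x. x \<noteq> 0 \<Longrightarrow> \<exists>i::nat. x = \<gamma> ^ i"
    using exists_gen by blast
  define M where "M = q ^ 2 - 1"
  obtain m where m: "q = Suc m" using q3 by (cases q) auto
  have MN: "M = (q + 1) * N" unfolding M_def N_def m by (simp add: power2_eq_square algebra_simps)
  have gM: "\<gamma> ^ M = 1"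
  proof -
    have "\<gamma> ^ Suc M = \<gamma>" using fin_field_pow_card[of \<gamma>] cardA q3 unfolding M_def
      by (metis Suc_diff_1 gr0I power_eq_0_iff zero_neq_numeral numeral_2_eq_2 le_zero_eq q3)
    then have "\<gamma> * \<gamma> ^ M = \<gamma> * 1" by simp
    then show ?thesis using g0 by simp
  qed
  have gmin: "\<gamma> ^ k \<noteq> 1" if "0 < k" "k < M" for k
  proof
    assume gk: "\<gamma> ^ k = 1"
    have "UNIV - {0} \<subseteq> (\<lambda>i. \<gamma> ^ i) ` {0..<k}"
    proof
      fix x :: 'a assume "x \<in> UNIV - {0}"
      then obtain i where i: "x = \<gamma> ^ i" using gall by blast
      have "\<gamma> ^ i = \<gamma> ^ (k * (i div k) + i mod k)" by simp
      also have "\<dots> = (\<gamma> ^ k) ^ (i div k) * \<gamma> ^ (i mod k)" by (simp only: power_add power_mult)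
      also have "\<dots> = \<gamma> ^ (i mod k)" using gk by simp
      finally show "x \<in> (\<lambda>i. \<gamma> ^ i) ` {0..<k}" using i that by auto
    qed
    then have "card (UNIV - {0 :: 'a}) \<le> card ((\<lambda>i. \<gamma> ^ i) ` {0..<k})" by (intro card_mono) auto
    also have "\<dots> \<le> k" using card_image_le[of "{0..<k}" "\<lambda>i. \<gamma> ^ i"] by simp
    finally have "card (UNIV - {0 :: 'a}) \<le> k" .
    moreover have "card (UNIV - {0 :: 'a}) = M" unfolding M_def using cardA by (simp add: card_Diff_singleton)
    ultimately show False using that by simp
  qed
  define g where "g = \<gamma> ^ (q + 1)"
  have gN: "g ^ N = 1"
  proof -
    have "g ^ N = \<gamma> ^ ((q + 1) * N)" unfolding g_def by (simp only: power_mult)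
    also have "\<dots> = 1" using gM MN by simp
    finally show ?thesis .
  qed
  have gnz: "g \<noteq> 0" unfolding g_def using g0 by simp
  have gqq: "g ^ q = g"
  proof -
    have "g ^ q = g ^ N * g" unfolding N_def m by simp
    then show ?thesis using gN by simp
  qed
  have gmin': "g ^ k \<noteq> 1" if "0 < k" "k < N" for k
  proof -
    have "0 < (q + 1) * k" using that by simp
    moreover have "(q + 1) * k < (q + 1) * N" using that by (intro mult_strict_left_mono) auto
    ultimately have "0 < (q + 1) * k" "(q + 1) * k < M" using MN by auto
    moreover have "g ^ k = \<gamma> ^ ((q + 1) * k)" unfolding g_def by (simp only: power_mult)
    ultimately show ?thesis using gmin by simp
  qed
  define E where "E = (\<lambda>k::nat. g ^ k)"
  have Einj: "inj_on E {0..<N}"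
  proof -
    have gen: "i = j" if "i < N" "j < N" "g ^ i = g ^ j" "i \<le> j" for i j
    proof (rule ccontr)
      assume "i \<noteq> j"
      then have lt: "0 < j - i" "j - i < N" using that by auto
      have "g ^ j = g ^ i * g ^ (j - i)" using that(4) by (simp add: power_add[symmetric])
      then have "g ^ i * g ^ (j - i) = g ^ i * 1" using that(3) by simp
      then have "g ^ (j - i) = 1" using gnz by simp
      then show False using gmin' lt by blast
    qed
    show ?thesis
    proof (rule inj_onI)
      fix i j assume i: "i \<in> {0..<N}" and j: "j \<in> {0..<N}" and eq: "E i = E j"
      have "g ^ i = g ^ j" using eq by (simp add: E_def)
      then show "i = j"
      proof (cases "i \<le> j")
        case True then show ?thesis using gen i j \<open>g ^ i = g ^ j\<close> by simp
      next
        case False then show ?thesis using gen[of j i] i j \<open>g ^ i = g ^ j\<close> by simp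
      qed
    qed
  qed
  have Eimg: "E ` {0..<N} \<subseteq> U"
  proof
    fix z assume "z \<in> E ` {0..<N}"
    then obtain k where z: "z = g ^ k" unfolding E_def by blast
    have "(g ^ k) ^ q = (g ^ q) ^ k" by (rule pow_swap)
    then have "z ^ q = z" using z gqq by simp
    moreover have "z \<noteq> 0" using z gnz by simp
    ultimately show "z \<in> U" unfolding U_def Fq_def by simp
  qed
  have Ebij: "bij_betw E {0..<N} U"
    using bij_by_card[OF Einj Eimg] cards N_def unfolding U_def by simp
  have isoE: "fg_iso {0..<N} (\<lambda>k. 2 * k mod N) U (\<lambda>a. a ^ 2)"
  proof (rule fg_isoI[OF Ebij])
    fix k assume "k \<in> {0..<N}"
    have "g ^ (2 * k) = g ^ (N * (2 * k div N) + 2 * k mod N)" by simp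
    also have "\<dots> = (g ^ N) ^ (2 * k div N) * g ^ (2 * k mod N)" by (simp only: power_add power_mult)
    also have "\<dots> = g ^ (2 * k mod N)" using gN by simp
    finally show "E (2 * k mod N) = (E k) ^ 2" unfolding E_def by (simp add: power_mult[symmetric] mult.commute)
  qed
  have isoU: "fg_iso U (\<lambda>a. a ^ 2) {0..<N} (\<lambda>k. 2 * k mod N)"
    by (rule fg_iso_sym[OF isoE]) (use N0 in auto)
  define Gq where "Gq = (\<lambda>(y, t). (if t = None then 2 * y mod r else y, tree_map t))"
  have isoNT: "fg_iso {0..<N} (\<lambda>k. 2 * k mod N) ({0..<r} \<times> tree_verts s) Gq"
    unfolding Gq_def by (rule NT[OF _ rodd]) (use Nsr in \<open>simp add: N_def\<close>)
  have UU: "\<forall>x\<in>U. x ^ 2 \<in> U"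
  proof
    fix x assume x: "x \<in> U"
    have "(x ^ 2) ^ q = (x ^ q) ^ 2" by (rule pow_swap)
    then show "x ^ 2 \<in> U" using x unfolding U_def Fq_def by simp
  qed
  have isoUQ: "fg_iso U (\<lambda>a. a ^ 2) ({0..<r} \<times> tree_verts s) Gq"
    by (rule fg_iso_trans[OF isoU isoNT UU])
  obtain eL where eL: "bij_betw eL L {0..<q}"
  proof -
    have "finite L" by simp
    from ex_bij_betw_nat_finite[OF this] obtain e0 where "bij_betw e0 {0..<card L} L" by blast
    then have "bij_betw (inv_into {0..<card L} e0) L {0..<card L}" by (rule bij_betw_inv_into)
    then show ?thesis using that cards by simp
  qed
  have isoUL: "fg_iso (U \<times> L) (\<lambda>(a, w). (a ^ 2, w)) (({0..<r} \<times> tree_verts s) \<times> {0..<q}) (\<lambda>(b, w). (Gq b, w))"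
    using fg_iso_prod[OF isoUQ eL] by simp
  define TI where "TI = {(d, k, x). d dvd r \<and> k < q * totient d div ord d 2 \<and> x \<in> cyctree_verts (ord d 2) s}"
  define TG :: "nat \<times> nat \<times> nat \<times> bool list option \<Rightarrow> nat \<times> nat \<times> nat \<times> bool list option"
    where "TG = (\<lambda>(d, k, x). (d, k, cyctree_map (ord d 2) x))"
  have isoST: "fg_iso (({0..<r} \<times> tree_verts s) \<times> {0..<q}) (\<lambda>(b, w). (Gq b, w)) TI TG"
    using ST4[OF rodd, of s q] unfolding TI_def TG_def Gq_def by simp
  have ULinv: "\<forall>x\<in>U \<times> L. (\<lambda>(a, w). (a ^ 2, w)) x \<in> U \<times> L" using UU by auto
  have isoR: "fg_iso (U \<times> L) (\<lambda>(a, w). (a ^ 2, w)) TI TG"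
    by (rule fg_iso_trans[OF isoUL isoST ULinv])
  obtain eK0 where eK0: "bij_betw eK0 K {0..<q}"
  proof -
    have "finite K" by simp
    from ex_bij_betw_nat_finite[OF this] obtain e0 where "bij_betw e0 {0..<card K} K" by blast
    then have "bij_betw (inv_into {0..<card K} e0) K {0..<card K}" by (rule bij_betw_inv_into)
    then show ?thesis using that cards by simp
  qed
  have zK: "0 \<in> K" unfolding K_def using q1 by simp
  define z0 where "z0 = eK0 0"
  have z0q: "z0 < q" using eK0 zK unfolding z0_def by (auto dest: bij_betwE)
  define \<tau> where "\<tau> = (\<lambda>n::nat. if n = 0 then z0 else if n = z0 then 0 else n)"
  have \<tau>bij: "bij_betw \<tau> {0..<q} {0..<q}"
    by (rule bij_betw_byWitness[where f'=\<tau>]) (use z0q q1 in \<open>auto simp: \<tau>_def\<close>)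
  define eK where "eK = \<tau> \<circ> eK0"
  have eKbij: "bij_betw eK K {0..<q}" unfolding eK_def using bij_betw_trans[OF eK0 \<tau>bij] .
  have eK0': "eK 0 = 0" unfolding eK_def \<tau>_def z0_def by simp
  have isoK: "fg_iso K (\<lambda>_. 0) (zstar_verts q) zstar_map"
    by (rule fg_isoI[of eK]) (use eKbij eK0' in \<open>auto simp: zstar_verts_def zstar_map_def\<close>)
  have isoS: "fg_iso S1 m1 (Inl ` zstar_verts q \<union> Inr ` TI) (map_sum zstar_map TG)"
    unfolding S1_def m1_def by (rule fg_iso_sum[OF isoK isoR])
  have final: "fg_iso UNIV f (Inl ` zstar_verts q \<union> Inr ` TI) (map_sum zstar_map TG)"
    by (rule fg_iso_trans[OF isoF isoS]) simp
  have tv: "target_verts q s r = Inl ` zstar_verts q \<union> Inr ` TI"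
    unfolding target_verts_def TI_def ..
  have tm: "target_map q s = map_sum zstar_map TG"
  proof
    fix z show "target_map q s z = map_sum zstar_map TG z"
      by (cases z) (auto simp: TG_def)
  qed
  show ?thesis using final unfolding tv tm f_def .
qed

end
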